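(* Let $k\ge 2$ be an integer and let $E=(C,V)$ be a $k$-Party election such that both $|C|$ and $|V|$ are divisible by $k$. Then $\mathrm{pcc\text{-}agr}(E)=0$ and $\mathrm{pcc^+\text{-}agr}(E)=1/k$.
   Context: An (approval) election is a pair $E=(C,V)$ with candidate set $C$ and a collection of voters $V$; each vote is a binary vector indicating which candidates the voter approves. A $k$-Party election (with $|C|,|V|$ divisible by $k$) is one where $C$ is partitioned into $k$ disjoint groups $C_1,\dots,C_k$ of equal size and $V$ into $k$ disjoint groups $V_1,\dots,V_k$ of equal size, and for each $i\in[k]$ every voter in $V_i$ approves exactly the candidates in $C_i$. Pearson correlation of $x,y\in\mathbb{R}^t$: $\mathrm{pcc}(x,y)=\frac{\sum_i(x[i]-\overline{x})(y[i]-\overline{y})}{\sqrt{\sum_i(x[i]-\overline{x})^2}\sqrt{\sum_i(y[i]-\overline{y})^2}}$ (set to $1$ if $x$ or $y$ is constant). $\mathrm{pcc\text{-}agr}(E)=\frac{1}{|V|^2}\sum_{u\in V}\sum_{v\in V}\mathrm{pcc}(u,v)$ and $\mathrm{pcc^+\text{-}agr}(E)=\frac{1}{|V|^2}\sum_{u\in V}\sum_{v\in V}\max(0,\mathrm{pcc}(u,v))$, summing over all ordered pairs including $u=v$. *)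

theory Defs
  imports Complex_Main
begin

definition vmean :: "'c set \<Rightarrow> ('c \<Rightarrow> real) \<Rightarrow> real" where
  "vmean I x = (\<Sum>i\<in>I. x i) / real (card I)"

definition is_constant :: "'c set \<Rightarrow> ('c \<Rightarrow> real) \<Rightarrow> bool" where
  "is_constant I x \<longleftrightarrow> (\<forall>i\<in>I. \<forall>j\<in>I. x i = x j)"

definition pcc :: "'c set \<Rightarrow> ('c \<Rightarrow> real) \<Rightarrow> ('c \<Rightarrow> real) \<Rightarrow> real" where
  "pcc I x y =
     (if is_constant I x \<or> is_constant I y then 1
      else (\<Sum>i\<in>I. (x i - vmean I x) * (y i - vmean I y)) /
           (sqrt (\<Sum>i\<in>I. (x i - vmean I x)\<^sup>2) * sqrt (\<Sum>i\<in>I. (y i - vmean I y)\<^sup>2)))"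

text \<open>An approval election: candidate set C, voter (index) set V, and the approval
  ballot vote v c (voter v approves candidate c). Voters are indices, so repeated
  ballots are allowed.\<close>

definition ballot :: "('v \<Rightarrow> 'c \<Rightarrow> bool) \<Rightarrow> 'v \<Rightarrow> 'c \<Rightarrow> real" where
  "ballot vote v = (\<lambda>c. if vote v c then 1 else 0)"

definition pcc_agr :: "'c set \<Rightarrow> 'v set \<Rightarrow> ('v \<Rightarrow> 'c \<Rightarrow> bool) \<Rightarrow> real" where
  "pcc_agr C V vote =
     (\<Sum>u\<in>V. \<Sum>v\<in>V. pcc C (ballot vote u) (ballot vote v)) / (real (card V))\<^sup>2"

definition pcc_pos_agr :: "'c set \<Rightarrow> 'v set \<Rightarrow> ('v \<Rightarrow> 'c \<Rightarrow> bool) \<Rightarrow> real" where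
  "pcc_pos_agr C V vote =
     (\<Sum>u\<in>V. \<Sum>v\<in>V. max 0 (pcc C (ballot vote u) (ballot vote v))) / (real (card V))\<^sup>2"

definition k_party_election :: "nat \<Rightarrow> 'c set \<Rightarrow> 'v set \<Rightarrow> ('v \<Rightarrow> 'c \<Rightarrow> bool) \<Rightarrow> bool" where
  "k_party_election k C V vote \<longleftrightarrow>
     (\<exists>Cg :: nat \<Rightarrow> 'c set. \<exists>Vg :: nat \<Rightarrow> 'v set.
        (\<Union>i<k. Cg i) = C \<and> (\<Union>i<k. Vg i) = V \<and>
        (\<forall>i<k. \<forall>j<k. i \<noteq> j \<longrightarrow> Cg i \<inter> Cg j = {} \<and> Vg i \<inter> Vg j = {}) \<and>
        (\<forall>i<k. \<forall>j<k. card (Cg i) = card (Cg j) \<and> card (Vg i) = card (Vg j)) \<and>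
        (\<forall>i<k. \<forall>v\<in>Vg i. \<forall>c\<in>C. vote v c \<longleftrightarrow> c \<in> Cg i))"

end

theory Submission
  imports Defs
begin

lemma pcc_cong:
  assumes "\<forall>c\<in>C. x c = x' c" "\<forall>c\<in>C. y c = y' c"
  shows "pcc C x y = pcc C x' y'"
proof -
  have 1: "vmean C x = vmean C x'" "vmean C y = vmean C y'"
    using assms unfolding vmean_def by (auto intro!: sum.cong)
  have 2: "is_constant C x = is_constant C x'" "is_constant C y = is_constant C y'"
    using assms unfolding is_constant_def by auto
  show ?thesis unfolding pcc_def 1 2 using assms
    by (simp cong: sum.cong)
qed

lemma centered_sum0:
  fixes x y :: "'c \<Rightarrow> real" and a b :: real
  assumes "finite C"
  shows "(\<Sum>i\<in>C. (x i - a) * (y i - b))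
       = (\<Sum>i\<in>C. x i * y i) - b * sum x C - a * sum y C + card C * (a * b)"
proof -
  have "(\<Sum>i\<in>C. (x i - a) * (y i - b)) = (\<Sum>i\<in>C. x i * y i - b * x i - a * y i + a * b)"
    by (rule sum.cong) (auto simp: algebra_simps)
  also have "\<dots> = (\<Sum>i\<in>C. x i * y i) - b * sum x C - a * sum y C + card C * (a * b)"
    by (simp add: sum.distrib sum_subtractf sum_distrib_left)
  finally show ?thesis .
qed

lemma centered_sum:
  fixes x y :: "'c \<Rightarrow> real"
  assumes "finite C" "card C > 0"
  shows "(\<Sum>i\<in>C. (x i - sum x C / card C) * (y i - sum y C / card C))
       = (\<Sum>i\<in>C. x i * y i) - sum x C * sum y C / card C"
  unfolding centered_sum0[OF assms(1)] using assms(2) by (simp add: field_simps)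

lemma sum_ind:
  assumes "finite C"
  shows "(\<Sum>c\<in>C. (if c \<in> A then 1 else 0 :: real)) = real (card (C \<inter> A))"
  using assms by (simp add: sum.If_cases)

lemma nonconst:
  assumes "A \<subseteq> C" "A \<noteq> {}" "A \<noteq> C"
  shows "\<not> is_constant C (\<lambda>c. if c \<in> A then 1 else 0)"
proof -
  obtain a where a: "a \<in> A" using assms by auto
  obtain b where b: "b \<in> C" "b \<notin> A" using assms by auto
  show ?thesis unfolding is_constant_def using a b assms(1) by (metis subsetD zero_neq_one)
qed

lemma pcc_ind:
  assumes fin: "finite C" and AC: "A \<subseteq> C" and BC: "B \<subseteq> C"
    and cA: "card A = m" and cB: "card B = m" and cC: "card C = k * m"
    and m: "m > 0" and k: "k \<ge> 2"
  shows "pcc C (\<lambda>c. if c \<in> A then 1 else 0) (\<lambda>c. if c \<in> B then 1 else 0)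
       = (real (card (A \<inter> B)) - m / k) / (m - m / k)"
proof -
  define x where "x = (\<lambda>c. if c \<in> A then 1 else 0 :: real)"
  define y where "y = (\<lambda>c. if c \<in> B then 1 else 0 :: real)"
  have Afin: "finite A" using AC fin finite_subset by blast
  have Bfin: "finite B" using BC fin finite_subset by blast
  have Ane: "A \<noteq> {}" using cA m by auto
  have Bne: "B \<noteq> {}" using cB m by auto
  have "card A < card C" using cA cC m k
    by (metis Suc_1 Suc_le_lessD less_imp_le_nat mult_less_cancel2 nat_mult_1 nless_le)
  then have AnC: "A \<noteq> C" by auto
  have "card B < card C" using cB cC m k
    by (metis Suc_1 Suc_le_lessD less_imp_le_nat mult_less_cancel2 nat_mult_1 nless_le)
  then have BnC: "B \<noteq> C" by auto
  have ncx: "\<not> is_constant C x" unfolding x_def by (rule nonconst[OF AC Ane AnC])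
  have ncy: "\<not> is_constant C y" unfolding y_def by (rule nonconst[OF BC Bne BnC])
  have cpos: "card C > 0" using cC m k by simp
  have "C \<inter> A = A" "C \<inter> B = B" using AC BC by auto
  then have sx: "sum x C = m" and sy: "sum y C = m" unfolding x_def y_def using fin cA cB
    by (simp_all add: sum_ind)
  have xy: "(\<Sum>i\<in>C. x i * y i) = card (A \<inter> B)"
  proof -
    have "(\<Sum>i\<in>C. x i * y i) = (\<Sum>c\<in>C. (if c \<in> A \<inter> B then 1 else 0 :: real))"
      unfolding x_def y_def by (rule sum.cong) auto
    also have "\<dots> = card (C \<inter> (A \<inter> B))" using fin by (rule sum_ind)
    also have "C \<inter> (A \<inter> B) = A \<inter> B" using AC by auto
    finally show ?thesis .
  qed
  have xx: "(\<Sum>i\<in>C. x i * x i) = m"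
  proof -
    have "(\<Sum>i\<in>C. x i * x i) = sum x C" unfolding x_def by (rule sum.cong) auto
    then show ?thesis using sx by simp
  qed
  have yy: "(\<Sum>i\<in>C. y i * y i) = m"
  proof -
    have "(\<Sum>i\<in>C. y i * y i) = sum y C" unfolding y_def by (rule sum.cong) auto
    then show ?thesis using sy by simp
  qed
  have mk: "real m * real m / real (card C) = m / k" using cC m k by (simp add: field_simps)
  have cov: "(\<Sum>i\<in>C. (x i - vmean C x) * (y i - vmean C y)) = card (A \<inter> B) - m / k"
    unfolding vmean_def using centered_sum[OF fin cpos, of x y] xy sx sy mk by simp
  have vx: "(\<Sum>i\<in>C. (x i - vmean C x)\<^sup>2) = m - m / k"
    unfolding vmean_def power2_eq_square using centered_sum[OF fin cpos, of x x] xx sx mk by simp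
  have vy: "(\<Sum>i\<in>C. (y i - vmean C y)\<^sup>2) = m - m / k"
    unfolding vmean_def power2_eq_square using centered_sum[OF fin cpos, of y y] yy sy mk by simp
  have pos: "real m - m / k > 0" using m k by (simp add: field_simps)
  have "pcc C x y = (real (card (A \<inter> B)) - m / k) / (sqrt (m - m / k) * sqrt (m - m / k))"
    unfolding pcc_def using ncx ncy cov vx vy by simp
  also have "sqrt (m - m / k) * sqrt (m - m / k) = m - m / k" using pos by simp
  finally show ?thesis unfolding x_def y_def .
qed

lemma sum_if_eq:
  fixes a b :: real
  assumes "i < k"
  shows "(\<Sum>j<k. if i = j then a else b) = real k * b + (a - b)"
proof -
  have "(\<Sum>j<k. if i = j then a else b) = (\<Sum>j<k. b + (if i = j then a - b else 0))"
    by (rule sum.cong) auto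
  also have "\<dots> = real k * b + (a - b)" using assms by (simp add: sum.distrib)
  finally show ?thesis .
qed

theorem proposition5:
  fixes k :: nat and C :: "'c set" and V :: "'v set" and vote :: "'v \<Rightarrow> 'c \<Rightarrow> bool"
  assumes "k \<ge> 2"
    and "finite C" and "C \<noteq> {}" and "finite V" and "V \<noteq> {}"
    and "k dvd card C" and "k dvd card V"
    and "k_party_election k C V vote"
  shows "pcc_agr C V vote = 0 \<and> pcc_pos_agr C V vote = 1 / real k"
proof -
  obtain Cg :: "nat \<Rightarrow> 'c set" and Vg :: "nat \<Rightarrow> 'v set" where
    hC: "(\<Union>i<k. Cg i) = C" and hV: "(\<Union>i<k. Vg i) = V" and
    disj: "\<forall>i<k. \<forall>j<k. i \<noteq> j \<longrightarrow> Cg i \<inter> Cg j = {} \<and> Vg i \<inter> Vg j = {}" and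
    eqc: "\<forall>i<k. \<forall>j<k. card (Cg i) = card (Cg j) \<and> card (Vg i) = card (Vg j)" and
    hvote: "\<forall>i<k. \<forall>v\<in>Vg i. \<forall>c\<in>C. vote v c \<longleftrightarrow> c \<in> Cg i"
    using assms(8) unfolding k_party_election_def by (elim exE conjE) (rule that)
  have k0: "0 < k" using assms(1) by simp
  define m where "m = card (Cg 0)"
  define n where "n = card (Vg 0)"
  have cCg: "card (Cg i) = m" if "i < k" for i using eqc[rule_format, OF that k0] m_def by simp
  have cVg: "card (Vg i) = n" if "i < k" for i using eqc[rule_format, OF that k0] n_def by simp
  have CgC: "Cg i \<subseteq> C" if "i < k" for i using UN_upper[of i "{..<k}" Cg] that hC by simp
  have VgV: "Vg i \<subseteq> V" if "i < k" for i using UN_upper[of i "{..<k}" Vg] that hV by simp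
  have finCg: "finite (Cg i)" if "i < k" for i using CgC[OF that] assms(2) finite_subset by blast
  have finVg: "finite (Vg i)" if "i < k" for i using VgV[OF that] assms(4) finite_subset by blast
  have "card C = (\<Sum>i<k. card (Cg i))" unfolding hC[symmetric]
    by (rule card_UN_disjoint) (use finCg disj in auto)
  also have "\<dots> = k * m" using cCg by simp
  finally have cardC: "card C = k * m" .
  have "card V = (\<Sum>i<k. card (Vg i))" unfolding hV[symmetric]
    by (rule card_UN_disjoint) (use finVg disj in auto)
  also have "\<dots> = k * n" using cVg by simp
  finally have cardV: "card V = k * n" .
  have mpos: "m > 0" using cardC assms(2,3)
    by (metis card_gt_0_iff mult_0_right neq0_conv)
  have npos: "n > 0" using cardV assms(4,5)
    by (metis card_gt_0_iff mult_0_right neq0_conv)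
  define g where "g v = (THE i. i < k \<and> v \<in> Vg i)" for v
  have gi: "g v = i" if "i < k" "v \<in> Vg i" for v i
    unfolding g_def
  proof (rule the_equality)
    show "i < k \<and> v \<in> Vg i" using that by simp
    fix j assume "j < k \<and> v \<in> Vg j"
    then show "j = i" using disj that by blast
  qed
  have gV: "g v < k \<and> v \<in> Vg (g v)" if vV: "v \<in> V" for v
  proof -
    obtain i where "i < k" "v \<in> Vg i" using vV hV by blast
    then show ?thesis using gi by simp
  qed
  define c where "c i j = (if i = j then 1 else - 1 / (real k - 1))" for i j :: nat
  have pccval: "pcc C (ballot vote u) (ballot vote v) = c (g u) (g v)"
    if "u \<in> V" "v \<in> V" for u v
  proof -
    let ?i = "g u" and ?j = "g v"
    have i: "?i < k" "u \<in> Vg ?i" and j: "?j < k" "v \<in> Vg ?j" using gV that by auto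
    have "pcc C (ballot vote u) (ballot vote v)
        = pcc C (\<lambda>c. if c \<in> Cg ?i then 1 else 0) (\<lambda>c. if c \<in> Cg ?j then 1 else 0)"
      by (rule pcc_cong) (use hvote i j in \<open>auto simp: ballot_def\<close>)
    also have "\<dots> = (real (card (Cg ?i \<inter> Cg ?j)) - m / k) / (m - m / k)"
      by (rule pcc_ind[OF assms(2) CgC[OF i(1)] CgC[OF j(1)] cCg[OF i(1)] cCg[OF j(1)] cardC mpos assms(1)])
    also have "\<dots> = c ?i ?j"
    proof (cases "?i = ?j")
      case True
      then have "card (Cg ?i \<inter> Cg ?j) = m" using cCg i by simp
      moreover have "real m - real m / real k \<noteq> 0" using mpos assms(1) by (simp add: field_simps)
      ultimately show ?thesis using True by (simp add: c_def)
    next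
      case False
      then have "card (Cg ?i \<inter> Cg ?j) = 0" using disj i j by simp
      moreover have "real k - 1 > 0" using assms(1) by simp
      moreover have "real m > 0" using mpos by simp
      ultimately show ?thesis using False k0 by (simp add: c_def field_simps)
    qed
    finally show ?thesis .
  qed
  have double: "(\<Sum>u\<in>V. \<Sum>v\<in>V. \<phi> (g u) (g v)) = (\<Sum>i<k. \<Sum>j<k. real n * real n * \<phi> i j)"
    for \<phi> :: "nat \<Rightarrow> nat \<Rightarrow> real"
  proof -
    have inner: "(\<Sum>v\<in>V. \<psi> (g v)) = (\<Sum>j<k. real n * \<psi> j)" for \<psi> :: "nat \<Rightarrow> real"
    proof -
      have "(\<Sum>v\<in>V. \<psi> (g v)) = (\<Sum>j<k. \<Sum>v\<in>Vg j. \<psi> (g v))" unfolding hV[symmetric]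
        by (rule sum.UNION_disjoint) (use finVg disj in auto)
      also have "\<dots> = (\<Sum>j<k. \<Sum>v\<in>Vg j. \<psi> j)"
        by (rule sum.cong, simp, rule sum.cong) (use gi in auto)
      also have "\<dots> = (\<Sum>j<k. real n * \<psi> j)" using cVg by simp
      finally show ?thesis .
    qed
    have "(\<Sum>u\<in>V. \<Sum>v\<in>V. \<phi> (g u) (g v)) = (\<Sum>u\<in>V. (\<lambda>i. \<Sum>j<k. real n * \<phi> i j) (g u))"
      using inner by simp
    also have "\<dots> = (\<Sum>i<k. real n * (\<Sum>j<k. real n * \<phi> i j))" by (rule inner)
    also have "\<dots> = (\<Sum>i<k. \<Sum>j<k. real n * real n * \<phi> i j)"
      by (simp add: sum_distrib_left mult.assoc)
    finally show ?thesis .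
  qed
  have km1: "real k - 1 > 0" using assms(1) by simp
  have s1: "(\<Sum>u\<in>V. \<Sum>v\<in>V. pcc C (ballot vote u) (ballot vote v)) = 0"
  proof -
    have "(\<Sum>u\<in>V. \<Sum>v\<in>V. pcc C (ballot vote u) (ballot vote v))
        = (\<Sum>u\<in>V. \<Sum>v\<in>V. c (g u) (g v))"
      using pccval by (auto intro!: sum.cong)
    also have "\<dots> = (\<Sum>i<k. \<Sum>j<k. real n * real n * c i j)" by (rule double)
    also have "\<dots> = (\<Sum>i<k. real n * real n * (\<Sum>j<k. c i j))"
      by (simp add: sum_distrib_left)
    also have "\<dots> = 0"
    proof (rule sum.neutral, intro ballI)
      fix i assume "i \<in> {..<k}"
      then have "(\<Sum>j<k. c i j) = real k * (- 1 / (real k - 1)) + (1 - (- 1 / (real k - 1)))"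
        unfolding c_def by (intro sum_if_eq) simp
      also have "\<dots> = 0" using km1 by (simp add: field_simps)
      finally show "real n * real n * (\<Sum>j<k. c i j) = 0" by simp
    qed
    finally show ?thesis .
  qed
  have s2: "(\<Sum>u\<in>V. \<Sum>v\<in>V. max 0 (pcc C (ballot vote u) (ballot vote v))) = real k * real n * real n"
  proof -
    have "(\<Sum>u\<in>V. \<Sum>v\<in>V. max 0 (pcc C (ballot vote u) (ballot vote v)))
        = (\<Sum>u\<in>V. \<Sum>v\<in>V. (\<lambda>i j. max 0 (c i j)) (g u) (g v))"
      using pccval by (auto intro!: sum.cong)
    also have "\<dots> = (\<Sum>i<k. \<Sum>j<k. real n * real n * max 0 (c i j))" by (rule double)
    also have "\<dots> = (\<Sum>i<k. real n * real n)"
    proof (rule sum.cong)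
      fix i assume "i \<in> {..<k}"
      have "(\<Sum>j<k. real n * real n * max 0 (c i j)) = (\<Sum>j<k. if i = j then real n * real n else 0)"
        by (rule sum.cong) (use km1 in \<open>auto simp: c_def\<close>)
      also have "\<dots> = real n * real n" using \<open>i \<in> {..<k}\<close> by simp
      finally show "(\<Sum>j<k. real n * real n * max 0 (c i j)) = real n * real n" .
    qed simp
    also have "\<dots> = real k * real n * real n" by simp
    finally show ?thesis .
  qed
  show ?thesis
    unfolding pcc_agr_def pcc_pos_agr_def using s1 s2 cardV k0 npos
    by (simp add: power2_eq_square field_simps)
qed

end
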